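(* Work in the projective model of $\mathbf{Nil}$ geometry described in the context. Let $P_1=(1,0,0,0)$, $P_2=(1,a,b,c)$ and $P_3=(1,d,e,f)$ with $ae-bd\neq0$. Then the translation-like triangular surface $S^{\mathbf{Nil},t}_{P_1,P_2,P_3}$ has the equation \[ z=\frac{xy}{2}+\frac{bde-abe+2ce-2bf}{2(ae-bd)}\,x+\frac{abd-ade+2af-2cd}{2(ae-bd)}\,y . \]
   Context: $\mathbf{Nil}$ is modelled on $\mathbb{R}^3$ with points in homogeneous coordinates $(1,x,y,z)$. For $Q=(1,q_1,q_2,q_3)$ the translation $\mathbf{T}_Q$ acts on row vectors from the right by $\begin{pmatrix}1&q_1&q_2&q_3\\0&1&0&0\\0&0&1&q_1\\0&0&0&1\end{pmatrix}$, i.e. $(1,a,b,c)\mapsto(1,q_1+a,q_2+b,q_3+bq_1+c)$, mapping $E_0=(1,0,0,0)$ to $Q$. A translation curve from $E_0$ with unit initial tangent $(u,v,w)$ is $x(t)=ut,\ y(t)=vt,\ z(t)=\frac12uvt^2+wt$; translation curves from $Q$ are their $\mathbf{T}_Q$-images. The translation-like triangular surface $S^{\mathbf{Nil},t}_{P_1,P_2,P_3}$ is the set of points $P$ such that the tangent vectors at $P$ of the translation curves from $P$ to $P_1$, $P_2$, $P_3$ are coplanar; equivalently, pulling back by $\mathbf{T}_P^{-1}$, such that the initial tangent vectors at $E_0$ of the translation curves from $E_0$ to $\mathbf{T}_P^{-1}(P_1),\mathbf{T}_P^{-1}(P_2),\mathbf{T}_P^{-1}(P_3)$ are linearly dependent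 (for a point $(1,x,y,z)$ a nonzero multiple of this initial tangent is $(x,y,z-\frac{xy}{2})$). *)

theory Defs
  imports "HOL-Analysis.Analysis"
begin

text \<open>Points of Nil are (1,x,y,z) in homogeneous coordinates; we represent them by
  their affine coordinates (x,y,z).\<close>
type_synonym nilpt = "real \<times> real \<times> real"

fun nil_transl :: "nilpt \<Rightarrow> nilpt \<Rightarrow> nilpt" where
  "nil_transl (q1, q2, q3) (a, b, c) = (q1 + a, q2 + b, q3 + b * q1 + c)"

definition transl_curve :: "real^3 \<Rightarrow> real \<Rightarrow> nilpt" where
  "transl_curve \<tau> t = (\<tau>$1 * t, \<tau>$2 * t, 1/2 * \<tau>$1 * \<tau>$2 * t^2 + \<tau>$3 * t)"

definition nil_init_tangents :: "nilpt \<Rightarrow> (real^3) set" where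
  "nil_init_tangents R = {\<tau>. norm \<tau> = 1 \<and> (\<exists>t\<ge>0. transl_curve \<tau> t = R)}"

text \<open>Translation-like triangular surface, in the pulled-back form: P lies on it iff
  the initial tangents at E0 of the translation curves from E0 to T_P^{-1}(P_i)
  are linearly dependent.\<close>
definition nil_transl_surface :: "nilpt \<Rightarrow> nilpt \<Rightarrow> nilpt \<Rightarrow> nilpt set" where
  "nil_transl_surface P1 P2 P3 =
     {P. \<exists>X1 X2 X3 \<tau>1 \<tau>2 \<tau>3.
          nil_transl P X1 = P1 \<and> nil_transl P X2 = P2 \<and> nil_transl P X3 = P3 \<and>
          \<tau>1 \<in> nil_init_tangents X1 \<and> \<tau>2 \<in> nil_init_tangents X2 \<and> \<tau>3 \<in> nil_init_tangents X3 \<and>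
          det (vector [\<tau>1, \<tau>2, \<tau>3] :: real^3^3) = 0}"

end

theory Submission
  imports Defs
begin

lemma nt_iff:
  "nil_transl (x,y,z) X = (q1,q2,q3) \<longleftrightarrow> X = (q1-x, q2-y, q3 - z - (q2-y)*x)"
  by (cases X) (auto simp: algebra_simps)

definition dt :: "real^3 \<Rightarrow> real^3 \<Rightarrow> real^3 \<Rightarrow> real" where
  "dt u v w = det (vector [u, v, w] :: real^3^3)"

lemma dt_expl: "dt u v w =
   (u$1)*(v$2)*(w$3) + (u$2)*(v$3)*(w$1) + (u$3)*(v$1)*(w$2) - (u$1)*(v$3)*(w$2) - (u$2)*(v$1)*(w$3) - (u$3)*(v$2)*(w$1)"
  unfolding dt_def by (simp add: det_3)

lemma tang_fwd:
  assumes "\<tau> \<in> nil_init_tangents (p,q,r)" "(p,q,r) \<noteq> (0,0,0)"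
  shows "\<exists>s>0. p = s*(\<tau>$1) \<and> q = s*(\<tau>$2) \<and> r - p*q/2 = s*(\<tau>$3)"
proof -
  from assms(1) obtain t where t: "t \<ge> 0" "transl_curve \<tau> t = (p,q,r)"
    unfolding nil_init_tangents_def by auto
  hence e: "p = t*(\<tau>$1)" "q = t*(\<tau>$2)" "r = 1/2 * (\<tau>$1) * (\<tau>$2) * t^2 + (\<tau>$3) * t"
    by (auto simp: transl_curve_def)
  have "t \<noteq> 0" using e assms(2) by auto
  with t have "t > 0" by auto
  moreover have "r - p*q/2 = t*(\<tau>$3)" using e by (simp add: power2_eq_square algebra_simps)
  ultimately show ?thesis using e by auto
qed

lemma tang_zero:
  assumes "norm \<tau> = 1" shows "\<tau> \<in> nil_init_tangents (0,0,0)"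
  using assms unfolding nil_init_tangents_def
  by (auto intro!: exI[of _ 0] simp: transl_curve_def)

lemma tang_ex:
  assumes "(p,q,r) \<noteq> (0,0,0)"
  shows "\<exists>\<tau>\<in>nil_init_tangents (p,q,r). \<exists>s>0. p = s*(\<tau>$1) \<and> q = s*(\<tau>$2) \<and> r - p*q/2 = s*(\<tau>$3)"
proof -
  define w where "w = (vector [p, q, r - p*q/2] :: real^3)"
  have "w \<noteq> 0"
  proof
    assume "w = 0"
    hence "(w$1) = 0" "(w$2) = 0" "(w$3) = 0" by auto
    hence "p = 0" "q = 0" "r = 0" unfolding w_def by auto
    with assms show False by auto
  qed
  define n where "n = norm w"
  have n: "n > 0" using \<open>w \<noteq> 0\<close> unfolding n_def by auto
  define \<tau> where "\<tau> = inverse n *\<^sub>R w"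
  have nt: "norm \<tau> = 1" using n unfolding \<tau>_def n_def by auto
  have c: "(\<tau>$1) = p / n" "(\<tau>$2) = q / n" "(\<tau>$3) = (r - p*q/2) / n"
    unfolding \<tau>_def w_def by (auto simp: field_simps)
  have "transl_curve \<tau> n = (p,q,r)"
    using n unfolding transl_curve_def c by (simp add: field_simps power2_eq_square)
  hence "\<tau> \<in> nil_init_tangents (p,q,r)" using nt n unfolding nil_init_tangents_def
    by (auto intro!: exI[of _ n])
  moreover have "p = n*(\<tau>$1) \<and> q = n*(\<tau>$2) \<and> r - p*q/2 = n*(\<tau>$3)" using n c by auto
  ultimately show ?thesis using n by blast
qed

lemma tang_some: "\<exists>\<tau>. \<tau> \<in> nil_init_tangents R"
proof (cases "R = (0,0,0)")
  case True thus ?thesis using tang_zero[of "axis 1 1"] by auto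
next
  case False
  obtain p q r where "R = (p,q,r)" by (cases R)
  thus ?thesis using tang_ex[of p q r] False by auto
qed

definition vv :: "real \<Rightarrow> real \<Rightarrow> real \<Rightarrow> real^3" where
  "vv p q r = vector [p, q, r - p*q/2]"

lemma plane_iff:
  fixes a b c d e f x y z :: real
  assumes D: "a * e - b * d \<noteq> 0"
  shows "dt (vv (-x) (-y) (-z+y*x)) (vv (a-x) (b-y) (c - z - (b-y)*x)) (vv (d-x) (e-y) (f - z - (e-y)*x)) = 0
    \<longleftrightarrow> z = x * y / 2
       + (b*d*e - a*b*e + 2*c*e - 2*b*f) / (2 * (a*e - b*d)) * x
       + (a*b*d - a*d*e + 2*a*f - 2*c*d) / (2 * (a*e - b*d)) * y"
proof -
  have "dt (vv (-x) (-y) (-z+y*x)) (vv (a-x) (b-y) (c - z - (b-y)*x)) (vv (d-x) (e-y) (f - z - (e-y)*x))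
     = (a*e-b*d) * (x * y / 2 - z) + x*(c*e - b*f + b*d*e/2 - a*b*e/2) + y*(a*f - d*c - a*d*e/2 + a*b*d/2)"
    unfolding dt_expl vv_def vector_3 by (simp add: field_simps)
  also have "\<dots> = 0 \<longleftrightarrow> z = x * y / 2
       + (b*d*e - a*b*e + 2*c*e - 2*b*f) / (2 * (a*e - b*d)) * x
       + (a*b*d - a*d*e + 2*a*f - 2*c*d) / (2 * (a*e - b*d)) * y"
  proof -
    define DD where "DD = a*e-b*d"
    define \<alpha> where "\<alpha> = c*e - b*f + b*d*e/2 - a*b*e/2"
    define \<beta> where "\<beta> = a*f - d*c - a*d*e/2 + a*b*d/2"
    have DD: "DD \<noteq> 0" using D DD_def by simp
    have D': "a*e \<noteq> b*d" "a*e - b*d \<noteq> 0" using D by auto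
    have e1: "(b*d*e - a*b*e + 2*c*e - 2*b*f) / (2 * (a*e - b*d)) = \<alpha> / DD"
      using D' unfolding \<alpha>_def DD_def by (simp add: field_simps)
    have e2: "(a*b*d - a*d*e + 2*a*f - 2*c*d) / (2 * (a*e - b*d)) = \<beta> / DD"
      using D' unfolding \<beta>_def DD_def by (simp add: field_simps)
    have "z = x*y/2 + \<alpha>/DD*x + \<beta>/DD*y \<longleftrightarrow> DD*z = DD*(x*y/2 + \<alpha>/DD*x + \<beta>/DD*y)"
      using DD by auto
    also have "DD*(x*y/2 + \<alpha>/DD*x + \<beta>/DD*y) = DD*x*y/2 + \<alpha>*x + \<beta>*y"
      using DD by (simp add: field_simps)
    finally have "z = x*y/2 + \<alpha>/DD*x + \<beta>/DD*y \<longleftrightarrow> DD * (x * y / 2 - z) + x*\<alpha> + y*\<beta> = 0"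
      by (auto simp: algebra_simps)
    thus ?thesis unfolding e1 e2 unfolding DD_def \<alpha>_def \<beta>_def by simp
  qed
  finally show ?thesis .
qed

lemma vv_eq: "p = s*(\<tau>$1) \<and> q = s*(\<tau>$2) \<and> r - p*q/2 = s*(\<tau>$3) \<Longrightarrow> vv p q r = s *\<^sub>R \<tau>"
  by (auto simp: vv_def vec_eq_iff forall_3)

lemma dt_scale: "dt (s *\<^sub>R u) (t *\<^sub>R v) (r *\<^sub>R w) = s*t*r*dt u v w"
  unfolding dt_expl by (simp add: algebra_simps)

lemma dt_eq: "dt u u w = 0" "dt u v u = 0" "dt u v v = 0"
  unfolding dt_expl by (simp_all add: algebra_simps)

lemma tang_vv:
  assumes "\<tau> \<in> nil_init_tangents (p,q,r)"
  shows "\<exists>s. vv p q r = s *\<^sub>R \<tau>"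
proof (cases "(p,q,r) = (0,0,0)")
  case True thus ?thesis by (intro exI[of _ 0]) (auto simp: vv_def vec_eq_iff forall_3)
next
  case False thus ?thesis using tang_fwd[OF assms] vv_eq by blast
qed

lemma tang_norm: "\<tau> \<in> nil_init_tangents R \<Longrightarrow> norm \<tau> = 1"
  unfolding nil_init_tangents_def by auto

lemma tang_pos:
  assumes "(p,q,r) \<noteq> (0,0,0)"
  shows "\<exists>\<tau>\<in>nil_init_tangents (p,q,r). \<exists>s>0. vv p q r = s *\<^sub>R \<tau>"
  using tang_ex[OF assms] vv_eq by blast

theorem lemma4p6:
  fixes a b c d e f :: real
  assumes "a * e - b * d \<noteq> 0"
  shows "nil_transl_surface (0, 0, 0) (a, b, c) (d, e, f) =
    {(x, y, z). z = x * y / 2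
       + (b*d*e - a*b*e + 2*c*e - 2*b*f) / (2 * (a*e - b*d)) * x
       + (a*b*d - a*d*e + 2*a*f - 2*c*d) / (2 * (a*e - b*d)) * y}"
proof (rule set_eqI)
  fix P :: nilpt
  obtain x y z where P: "P = (x,y,z)" by (cases P)
  define X1 where "X1 = (0-x, 0-y, 0 - z - (0-y)*x)"
  define X2 where "X2 = (a-x, b-y, c - z - (b-y)*x)"
  define X3 where "X3 = (d-x, e-y, f - z - (e-y)*x)"
  have mem: "P \<in> nil_transl_surface (0, 0, 0) (a, b, c) (d, e, f) \<longleftrightarrow>
     (\<exists>\<tau>1 \<tau>2 \<tau>3. \<tau>1 \<in> nil_init_tangents X1 \<and> \<tau>2 \<in> nil_init_tangents X2 \<and> \<tau>3 \<in> nil_init_tangents X3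
        \<and> dt \<tau>1 \<tau>2 \<tau>3 = 0)"
    unfolding nil_transl_surface_def P mem_Collect_eq unfolding nt_iff X1_def X2_def X3_def dt_def by auto
  define V where "V = dt (vv (-x) (-y) (-z+y*x)) (vv (a-x) (b-y) (c - z - (b-y)*x)) (vv (d-x) (e-y) (f - z - (e-y)*x))"
  have pl: "P \<in> {(x, y, z). z = x * y / 2
       + (b*d*e - a*b*e + 2*c*e - 2*b*f) / (2 * (a*e - b*d)) * x
       + (a*b*d - a*d*e + 2*a*f - 2*c*d) / (2 * (a*e - b*d)) * y} \<longleftrightarrow> V = 0"
    unfolding V_def plane_iff[OF assms] P by auto
  have X1': "X1 = (-x, -y, -z+y*x)" unfolding X1_def by simp
  show "P \<in> nil_transl_surface (0, 0, 0) (a, b, c) (d, e, f) \<longleftrightarrow> P \<in> {(x, y, z). z = x * y / 2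
       + (b*d*e - a*b*e + 2*c*e - 2*b*f) / (2 * (a*e - b*d)) * x
       + (a*b*d - a*d*e + 2*a*f - 2*c*d) / (2 * (a*e - b*d)) * y}"
    unfolding mem pl
  proof
    assume "\<exists>\<tau>1 \<tau>2 \<tau>3. \<tau>1 \<in> nil_init_tangents X1 \<and> \<tau>2 \<in> nil_init_tangents X2 \<and> \<tau>3 \<in> nil_init_tangents X3
        \<and> dt \<tau>1 \<tau>2 \<tau>3 = 0"
    then obtain \<tau>1 \<tau>2 \<tau>3 where t: "\<tau>1 \<in> nil_init_tangents X1" "\<tau>2 \<in> nil_init_tangents X2"
       "\<tau>3 \<in> nil_init_tangents X3" "dt \<tau>1 \<tau>2 \<tau>3 = 0" by blast
    obtain s1 where s1: "vv (-x) (-y) (-z+y*x) = s1 *\<^sub>R \<tau>1" using tang_vv t(1) unfolding X1' by blast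
    obtain s2 where s2: "vv (a-x) (b-y) (c - z - (b-y)*x) = s2 *\<^sub>R \<tau>2" using tang_vv t(2) unfolding X2_def by blast
    obtain s3 where s3: "vv (d-x) (e-y) (f - z - (e-y)*x) = s3 *\<^sub>R \<tau>3" using tang_vv t(3) unfolding X3_def by blast
    show "V = 0" unfolding V_def s1 s2 s3 dt_scale t(4) by simp
  next
    assume V: "V = 0"
    show "\<exists>\<tau>1 \<tau>2 \<tau>3. \<tau>1 \<in> nil_init_tangents X1 \<and> \<tau>2 \<in> nil_init_tangents X2 \<and> \<tau>3 \<in> nil_init_tangents X3
        \<and> dt \<tau>1 \<tau>2 \<tau>3 = 0"
    proof (cases "X1 = (0,0,0) \<or> X2 = (0,0,0) \<or> X3 = (0,0,0)")
      case True
      obtain \<tau>1 \<tau>2 \<tau>3 where t: "\<tau>1 \<in> nil_init_tangents X1" "\<tau>2 \<in> nil_init_tangents X2"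
       "\<tau>3 \<in> nil_init_tangents X3" using tang_some by blast
      show ?thesis using True
      proof (elim disjE)
        assume "X1 = (0,0,0)"
        thus ?thesis using t tang_zero[OF tang_norm[OF t(2)]] dt_eq by blast
      next
        assume "X2 = (0,0,0)"
        thus ?thesis using t tang_zero[OF tang_norm[OF t(1)]] dt_eq by blast
      next
        assume "X3 = (0,0,0)"
        thus ?thesis using t tang_zero[OF tang_norm[OF t(1)]] dt_eq by blast
      qed
    next
      case False
      obtain \<tau>1 s1 where t1: "\<tau>1 \<in> nil_init_tangents X1" "s1 > 0" "vv (-x) (-y) (-z+y*x) = s1 *\<^sub>R \<tau>1"
        using tang_pos[of "-x" "-y" "-z+y*x"] False unfolding X1' by blast
      obtain \<tau>2 s2 where t2: "\<tau>2 \<in> nil_init_tangents X2" "s2 > 0" "vv (a-x) (b-y) (c - z - (b-y)*x) = s2 *\<^sub>R \<tau>2"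
        using tang_pos[of "a-x" "b-y" "c - z - (b-y)*x"] False unfolding X2_def by blast
      obtain \<tau>3 s3 where t3: "\<tau>3 \<in> nil_init_tangents X3" "s3 > 0" "vv (d-x) (e-y) (f - z - (e-y)*x) = s3 *\<^sub>R \<tau>3"
        using tang_pos[of "d-x" "e-y" "f - z - (e-y)*x"] False unfolding X3_def by blast
      have "s1 * s2 * s3 * dt \<tau>1 \<tau>2 \<tau>3 = 0" using V unfolding V_def t1(3) t2(3) t3(3) dt_scale .
      hence "dt \<tau>1 \<tau>2 \<tau>3 = 0" using t1(2) t2(2) t3(2) by simp
      thus ?thesis using t1 t2 t3 by blast
    qed
  qed
qed

end
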